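(* Let $n>24$, $0<\epsilon<\frac13$, $\delta>0$, $s>0$, and $m=\epsilon^{-2}n^{1+\delta}$ (assumed to be an integer). Let $$A=\left\{y\in U^m:\ \left|\sum_{i=1}^n\frac{k_i(y)(k_i(y)-1)}{m(m-1)}\cdot\frac1{\|p\|^2}-1\right|\le 3\epsilon\right\}$$ and $C_s=\{x\in U^m: d_T(x,A)<s\}$. Then for every $x\in C_s$ there is $y\in A$ such that $$\left|\sum_{i=1}^n\frac{k_i(x)(k_i(x)-1)}{m(m-1)}-\sum_{i=1}^n\frac{k_i(y)(k_i(y)-1)}{m(m-1)}\right|\le \epsilon\,\|p\|^2\left(\frac{6s}{n^{\delta/2}}+\frac{5s^2\epsilon}{n^{\delta}}\right).$$
   Context: Standing setup: $U$ is a finite set (the key space) with a probability measure $q$; $T=\{1,\dots,n\}$; $h:U\to T$ is an arbitrary function. $p_i=\sum_{u\in h^{-1}(i)}q(u)$ and $\|p\|^2=\sum_{i=1}^n p_i^2$. For $x=(x_1,\dots,x_m)\in U^m$, $k_i(x)=|\{j: h(x_j)=i\}|$. Talagrand's convex distance: $d_T(x,A)=\sup\{\inf_{y\in A}\sum_{j=1}^m\alpha_j\mathbf 1(x_j\ne y_j)\ :\ \alpha\in\mathbb R^m,\ \sum_j\alpha_j^2\le 1\}$, where $\mathbf 1(x_j\ne y_j)$ is $1$ if $x_j\ne y_j$ and $0$ otherwise. *)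

theory Defs
  imports Complex_Main "HOL-Library.Extended_Real"
begin

definition words :: "'a set \<Rightarrow> nat \<Rightarrow> 'a list set" where
  "words U m = {x. length x = m \<and> set x \<subseteq> U}"

definition kcount :: "('a \<Rightarrow> nat) \<Rightarrow> nat \<Rightarrow> 'a list \<Rightarrow> nat" where
  "kcount h i x = card {j. j < length x \<and> h (x ! j) = i}"

definition pmass :: "'a set \<Rightarrow> ('a \<Rightarrow> real) \<Rightarrow> ('a \<Rightarrow> nat) \<Rightarrow> nat \<Rightarrow> real" where
  "pmass U q h i = (\<Sum>u\<in>{u\<in>U. h u = i}. q u)"

definition pnorm2 :: "'a set \<Rightarrow> ('a \<Rightarrow> real) \<Rightarrow> ('a \<Rightarrow> nat) \<Rightarrow> nat \<Rightarrow> real" where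
  "pnorm2 U q h n = (\<Sum>i=1..n. (pmass U q h i)^2)"

definition collstat :: "('a \<Rightarrow> nat) \<Rightarrow> nat \<Rightarrow> nat \<Rightarrow> 'a list \<Rightarrow> real" where
  "collstat h n m x =
     (\<Sum>i=1..n. real (kcount h i x) * (real (kcount h i x) - 1) / (real m * (real m - 1)))"

text \<open>Talagrand's convex distance, valued in the extended reals (so that the
  distance to the empty set is +infinity).\<close>
definition talagrand_dist :: "'a list \<Rightarrow> 'a list set \<Rightarrow> ereal" where
  "talagrand_dist x A =
     (SUP \<alpha> \<in> {\<alpha>::nat \<Rightarrow> real. (\<Sum>j<length x. (\<alpha> j)^2) \<le> 1}.
        INF y \<in> A. ereal (\<Sum>j<length x. \<alpha> j * (if x ! j \<noteq> y ! j then 1 else 0)))"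

end

theory Submission
  imports Defs
begin


lemma comb:
  fixes f g :: "nat \<Rightarrow> nat" and I D :: "nat set" and m :: nat
  assumes finI: "finite I" and fI: "\<forall>j<m. f j \<in> I" and gI: "\<forall>j<m. g j \<in> I"
    and Dsub: "D \<subseteq> {..<m}" and agree: "\<forall>j<m. j \<notin> D \<longrightarrow> f j = g j"
  defines "kx \<equiv> \<lambda>i. real (card {j. j < m \<and> f j = i})"
    and "ky \<equiv> \<lambda>i. real (card {j. j < m \<and> g j = i})"
  shows "(\<Sum>i\<in>I. kx i) = (\<Sum>i\<in>I. ky i)"
    and "\<bar>(\<Sum>i\<in>I. (kx i)^2) - (\<Sum>i\<in>I. (ky i)^2)\<bar>
           \<le> 2 * real (card D) * sqrt (\<Sum>i\<in>I. (ky i)^2) + (real (card D))^2"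
proof -
  define c where "c i = real (card {j. j < m \<and> j \<notin> D \<and> f j = i})" for i
  define a where "a i = real (card {j. j \<in> D \<and> f j = i})" for i
  define b where "b i = real (card {j. j \<in> D \<and> g j = i})" for i
  define t where "t = real (card D)"
  define K' where "K' = (\<Sum>i\<in>I. (ky i)^2)"
  have finD: "finite D" using Dsub finite_subset by blast
  have kxe: "kx i = c i + a i" for i
  proof -
    have "{j. j < m \<and> f j = i} = {j. j < m \<and> j \<notin> D \<and> f j = i} \<union> {j. j \<in> D \<and> f j = i}"
      using Dsub by auto
    moreover have "card ({j. j < m \<and> j \<notin> D \<and> f j = i} \<union> {j. j \<in> D \<and> f j = i})
       = card {j. j < m \<and> j \<notin> D \<and> f j = i} + card {j. j \<in> D \<and> f j = i}"
      by (rule card_Un_disjoint) (use finD in auto)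
    ultimately show ?thesis unfolding kx_def c_def a_def by simp
  qed
  have kye: "ky i = c i + b i" for i
  proof -
    have e: "{j. j < m \<and> j \<notin> D \<and> f j = i} = {j. j < m \<and> j \<notin> D \<and> g j = i}"
      using agree by auto
    have "{j. j < m \<and> g j = i} = {j. j < m \<and> j \<notin> D \<and> g j = i} \<union> {j. j \<in> D \<and> g j = i}"
      using Dsub by auto
    moreover have "card ({j. j < m \<and> j \<notin> D \<and> g j = i} \<union> {j. j \<in> D \<and> g j = i})
       = card {j. j < m \<and> j \<notin> D \<and> g j = i} + card {j. j \<in> D \<and> g j = i}"
      by (rule card_Un_disjoint) (use finD in auto)
    ultimately show ?thesis unfolding ky_def c_def b_def e by simp
  qed
  have sumfib: "(\<Sum>i\<in>I. real (card {j. j \<in> D \<and> F j = i})) = t"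
    if FI: "\<forall>j<m. F j \<in> I" for F :: "nat \<Rightarrow> nat"
  proof -
    have "D = (\<Union>i\<in>I. {j. j \<in> D \<and> F j = i})" using FI Dsub by auto
    hence "card D = card (\<Union>i\<in>I. {j. j \<in> D \<and> F j = i})" by simp
    also have "\<dots> = (\<Sum>i\<in>I. card {j. j \<in> D \<and> F j = i})"
      by (rule card_UN_disjoint) (use finI finD in auto)
    finally show ?thesis unfolding t_def by simp
  qed
  have sa: "(\<Sum>i\<in>I. a i) = t" unfolding a_def using sumfib fI by blast
  have sb: "(\<Sum>i\<in>I. b i) = t" unfolding b_def using sumfib gI by blast
  have c0: "c i \<ge> 0" "a i \<ge> 0" "b i \<ge> 0" for i by (auto simp: c_def a_def b_def)
  show "(\<Sum>i\<in>I. kx i) = (\<Sum>i\<in>I. ky i)"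
    by (simp add: kxe kye sum.distrib sa sb)
  have ale: "a i \<le> t" if "i \<in> I" for i
    using member_le_sum[of i I a] that finI c0 sa by auto
  have ble: "b i \<le> t" if "i \<in> I" for i
    using member_le_sum[of i I b] that finI c0 sb by auto
  have kyle: "ky i \<le> sqrt K'" if "i \<in> I" for i
  proof -
    have "(ky i)^2 \<le> K'" unfolding K'_def
      using member_le_sum[of i I "\<lambda>i. (ky i)^2"] that finI by auto
    moreover have "ky i \<ge> 0" by (simp add: ky_def)
    ultimately show ?thesis using real_le_rsqrt by blast
  qed
  have s1: "(\<Sum>i\<in>I. a i * ky i) \<le> t * sqrt K'"
  proof -
    have "(\<Sum>i\<in>I. a i * ky i) \<le> (\<Sum>i\<in>I. a i * sqrt K')"
      by (rule sum_mono) (simp add: c0 kyle mult_left_mono)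
    also have "\<dots> = t * sqrt K'" by (simp add: sum_distrib_right[symmetric] sa)
    finally show ?thesis .
  qed
  have s2: "(\<Sum>i\<in>I. b i * ky i) \<le> t * sqrt K'"
  proof -
    have "(\<Sum>i\<in>I. b i * ky i) \<le> (\<Sum>i\<in>I. b i * sqrt K')"
      by (rule sum_mono) (simp add: c0 kyle mult_left_mono)
    also have "\<dots> = t * sqrt K'" by (simp add: sum_distrib_right[symmetric] sb)
    finally show ?thesis .
  qed
  have s3: "(\<Sum>i\<in>I. (a i)^2) \<le> t^2"
  proof -
    have "(\<Sum>i\<in>I. (a i)^2) \<le> (\<Sum>i\<in>I. a i * t)"
      by (rule sum_mono) (simp add: power2_eq_square c0 ale mult_left_mono)
    also have "\<dots> = t^2" by (simp add: sum_distrib_right[symmetric] sa power2_eq_square)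
    finally show ?thesis .
  qed
  have d1: "(\<Sum>i\<in>I. (kx i)^2) - K' \<le> 2 * (\<Sum>i\<in>I. a i * ky i) + (\<Sum>i\<in>I. (a i)^2)"
  proof -
    have "(\<Sum>i\<in>I. (kx i)^2) - K' = (\<Sum>i\<in>I. (kx i)^2 - (ky i)^2)"
      by (simp add: K'_def sum_subtractf)
    also have "\<dots> \<le> (\<Sum>i\<in>I. 2 * (a i * ky i) + (a i)^2)"
      by (rule sum_mono) (simp add: kxe kye power2_eq_square algebra_simps c0 mult_nonneg_nonneg)
    also have "\<dots> = 2 * (\<Sum>i\<in>I. a i * ky i) + (\<Sum>i\<in>I. (a i)^2)"
      by (simp add: sum.distrib sum_distrib_left)
    finally show ?thesis .
  qed
  have d2: "K' - (\<Sum>i\<in>I. (kx i)^2) \<le> 2 * (\<Sum>i\<in>I. b i * ky i)"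
  proof -
    have "K' - (\<Sum>i\<in>I. (kx i)^2) = (\<Sum>i\<in>I. (ky i)^2 - (kx i)^2)"
      by (simp add: K'_def sum_subtractf)
    also have "\<dots> \<le> (\<Sum>i\<in>I. 2 * (b i * ky i))"
      by (rule sum_mono) (simp add: kxe kye power2_eq_square algebra_simps c0 mult_nonneg_nonneg)
    also have "\<dots> = 2 * (\<Sum>i\<in>I. b i * ky i)"
      by (simp add: sum_distrib_left)
    finally show ?thesis .
  qed
  have "t^2 \<ge> 0" by simp
  show "\<bar>(\<Sum>i\<in>I. (kx i)^2) - (\<Sum>i\<in>I. (ky i)^2)\<bar>
           \<le> 2 * real (card D) * sqrt (\<Sum>i\<in>I. (ky i)^2) + (real (card D))^2"
    using d1 d2 s1 s2 s3 `t^2 \<ge> 0` unfolding K'_def[symmetric] t_def[symmetric] by linarith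
qed



lemma arith_core:
  fixes m P n s t D K' :: real
  assumes D: "\<bar>D\<bar> \<le> 2 * t * sqrt K' + t^2" and t0: "0 \<le> t" and ts: "t < s * sqrt m"
    and K'0: "0 \<le> K'" and K'le: "K' \<le> 2 * P * m * (m - 1) + m" and Pn: "P * n \<ge> 1"
    and n1: "n \<ge> 1" and mn: "m \<ge> 9 * n" and s0: "s > 0"
  shows "\<bar>D\<bar> / (m * (m - 1)) \<le> 6 * s * P * sqrt n / sqrt m + 5 * s^2 * P * n / m"
proof -
  have m3: "m \<ge> 9" using mn n1 by linarith
  have P0: "P > 0"
  proof (rule ccontr)
    assume "\<not> P > 0"
    hence "P * n \<le> 0" using n1 by (simp add: mult_nonpos_nonneg)
    thus False using Pn by linarith
  qed
  have "P * n \<le> P * m" using P0 mn n1 by (intro mult_left_mono) auto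
  hence Pm: "P * m \<ge> 1" using Pn by linarith
  have "K' \<le> 4 * P * m^2"
  proof -
    have "1 * m \<le> P * m * m" using Pm m3 by (intro mult_right_mono) auto
    moreover have "2 * P * m * (m - 1) \<le> 2 * (P * m * m)" using P0 m3 by simp
    moreover have "0 \<le> P * m * m" using P0 m3 by simp
    moreover have "4 * P * m^2 = 4 * (P * m * m)" by (simp add: power2_eq_square)
    ultimately show ?thesis using K'le by linarith
  qed
  hence sK: "sqrt K' \<le> 2 * sqrt P * m"
  proof -
    assume "K' \<le> 4 * P * m^2"
    hence "sqrt K' \<le> sqrt (4 * P * m^2)" by simp
    also have "\<dots> = 2 * sqrt P * m" using m3 P0 by (simp add: real_sqrt_mult)
    finally show ?thesis .
  qed
  define r where "r = sqrt m"
  have r0: "r > 0" using m3 r_def by simp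
  have rr: "r * r = m" using m3 r_def by simp
  have t2: "t^2 \<le> s^2 * m"
  proof -
    have "t^2 \<le> (s * r)^2" using t0 ts r_def by (simp add: power_mono)
    also have "(s * r)^2 = s^2 * (r * r)" by (simp add: power2_eq_square algebra_simps)
    finally show ?thesis using rr by simp
  qed
  have tK: "t * sqrt K' \<le> s * r * (2 * sqrt P * m)"
    using ts sK r_def m3 s0 K'0 by (intro mult_mono) auto
  have Dle: "\<bar>D\<bar> \<le> 4 * s * sqrt P * r * m + s^2 * m"
    using D tK t2 by (simp add: algebra_simps)
  have sPn: "sqrt P * sqrt n \<ge> 1"
    using Pn by (metis real_sqrt_ge_one real_sqrt_mult)
  have mm: "m * (m - 1) > 0" using m3 by simp
  have "\<bar>D\<bar> / (m * (m - 1)) \<le> (4 * s * sqrt P * r * m + s^2 * m) / (m * (m - 1))"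
    using Dle mm by (simp add: divide_right_mono)
  also have "\<dots> = 4 * s * sqrt P * r / (m - 1) + s^2 / (m - 1)"
  proof -
    have "m \<noteq> 0" using m3 by auto
    have "4 * s * sqrt P * r * m + s^2 * m = m * (4 * s * sqrt P * r + s^2)" by (simp add: algebra_simps)
    hence "(4 * s * sqrt P * r * m + s^2 * m) / (m * (m - 1)) = (4 * s * sqrt P * r + s^2) / (m - 1)"
      using `m \<noteq> 0` by simp
    thus ?thesis by (simp add: add_divide_distrib)
  qed
  also have "\<dots> \<le> 6 * s * P * sqrt n / r + 5 * s^2 * P * n / m"
  proof -
    have a1: "4 * s * sqrt P * r / (m - 1) \<le> 6 * s * P * sqrt n / r"
    proof -
      have "6 * (m - 1) * 1 \<le> 6 * (m - 1) * (sqrt P * sqrt n)"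
        using sPn m3 by (intro mult_left_mono) auto
      moreover have "4 * m \<le> 6 * (m - 1) * 1" using m3 by (simp add: algebra_simps)
      ultimately have "4 * m \<le> 6 * (m - 1) * (sqrt P * sqrt n)" by (rule order_trans[rotated])
      hence "(s * sqrt P) * (4 * m) \<le> (s * sqrt P) * (6 * (m - 1) * (sqrt P * sqrt n))"
        using s0 P0 by (intro mult_left_mono) auto
      hence "4 * s * sqrt P * m \<le> 6 * s * sqrt P * (m - 1) * (sqrt P * sqrt n)"
        by (simp add: algebra_simps)
      hence "4 * s * sqrt P * (r * r) \<le> 6 * s * P * sqrt n * (m - 1)"
      proof -
        assume H: "4 * s * sqrt P * m \<le> 6 * s * sqrt P * (m - 1) * (sqrt P * sqrt n)"
        have e1: "6 * s * sqrt P * (m - 1) * (sqrt P * sqrt n) = 6 * s * (sqrt P * sqrt P) * sqrt n * (m - 1)"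
          by (simp only: mult_ac)
        have e2: "sqrt P * sqrt P = P" using P0 by simp
        show ?thesis using H rr unfolding e1 e2 by simp
      qed
      thus ?thesis using r0 m3 by (simp add: field_simps)
    qed
    have a2: "s^2 / (m - 1) \<le> 5 * s^2 * P * n / m"
    proof -
      have "5 * (m - 1) * 1 \<le> 5 * (m - 1) * (P * n)" using Pn m3 by (intro mult_left_mono) auto
      moreover have "m \<le> 5 * (m - 1) * 1" using m3 by (simp add: algebra_simps)
      ultimately have "m \<le> 5 * (m - 1) * (P * n)" by (rule order_trans[rotated])
      hence "s^2 * m \<le> s^2 * (5 * (m - 1) * (P * n))"
        by (intro mult_left_mono) auto
      hence "s^2 * m \<le> 5 * s^2 * P * n * (m - 1)" by (simp add: algebra_simps)
      thus ?thesis using m3 by (simp add: field_simps)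
    qed
    show ?thesis using a1 a2 by linarith
  qed
  finally show ?thesis unfolding r_def .
qed


lemma fiber_sum:
  fixes F :: "nat \<Rightarrow> nat" and I :: "nat set"
  assumes "finite I" "\<forall>j<m. F j \<in> I"
  shows "(\<Sum>i\<in>I. real (card {j. j < m \<and> F j = i})) = real m"
proof -
  have "{..<m} = (\<Union>i\<in>I. {j. j < m \<and> F j = i})" using assms by auto
  hence "card {..<m} = card (\<Union>i\<in>I. {j. j < m \<and> F j = i})" by simp
  also have "\<dots> = (\<Sum>i\<in>I. card {j. j < m \<and> F j = i})"
    by (rule card_UN_disjoint) (use assms in auto)
  finally have "m = (\<Sum>i\<in>I. card {j. j < m \<and> F j = i})" by simp
  thus ?thesis by (metis of_nat_sum)
qed

lemma collstat_eq:
  "collstat h n m x = ((\<Sum>i=1..n. (real (kcount h i x))^2) - (\<Sum>i=1..n. real (kcount h i x)))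
        / (real m * (real m - 1))"
  unfolding collstat_def
  by (simp add: sum_divide_distrib[symmetric] sum_subtractf[symmetric] power2_eq_square algebra_simps)

lemma pnorm_ge:
  fixes U :: "'a set" and q :: "'a \<Rightarrow> real" and h :: "'a \<Rightarrow> nat"
  assumes finU: "finite U" and q_prob: "(\<Sum>u\<in>U. q u) = 1"
    and h_range: "\<forall>u\<in>U. h u \<in> {1..n}" and n1: "n \<ge> 1"
  shows "pnorm2 U q h n * real n \<ge> 1"
proof -
  have s1: "(\<Sum>i=1..n. pmass U q h i) = 1"
  proof -
    have "h ` U \<subseteq> {1..n}" using h_range by auto
    thus ?thesis unfolding pmass_def using sum.group[OF finU, of "{1..n}" h q] q_prob by simp
  qed
  have s2: "(\<Sum>i=1..n. 2 * pmass U q h i / real n) = 2 / real n"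
  proof -
    have "(\<Sum>i=1..n. 2 * pmass U q h i / real n) = 2 * (\<Sum>i=1..n. pmass U q h i) / real n"
      by (simp add: sum_divide_distrib sum_distrib_left)
    thus ?thesis by (simp only: s1)
  qed
  have "0 \<le> (\<Sum>i=1..n. (pmass U q h i - 1 / real n)^2)" by (simp add: sum_nonneg)
  also have "\<dots> = (\<Sum>i=1..n. (pmass U q h i)^2 - 2 / real n * pmass U q h i + 1 / (real n)^2)"
    by (rule sum.cong) (auto simp: power2_eq_square field_simps)
  also have "\<dots> = pnorm2 U q h n - 2 / real n * 1 + real n / (real n)^2"
    unfolding pnorm2_def by (simp add: sum.distrib sum_subtractf sum_distrib_left[symmetric] s1) (insert s2, simp)
  also have "\<dots> = pnorm2 U q h n - 1 / real n"
    using n1 by (simp add: power2_eq_square field_simps)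
  finally have "1 / real n \<le> pnorm2 U q h n" by simp
  thus ?thesis using n1 by (simp add: field_simps)
qed

theorem lemma4:
  fixes U :: "'a set" and q :: "'a \<Rightarrow> real" and h :: "'a \<Rightarrow> nat"
    and n m :: nat and \<epsilon> \<delta> s :: real
  assumes finU: "finite U"
    and q_nonneg: "\<forall>u\<in>U. 0 \<le> q u"
    and q_prob: "(\<Sum>u\<in>U. q u) = 1"
    and h_range: "\<forall>u\<in>U. h u \<in> {1..n}"
    and n_gt: "n > 24"
    and eps_pos: "0 < \<epsilon>" and eps_lt: "\<epsilon> < 1/3"
    and delta_pos: "\<delta> > 0"
    and s_pos: "s > 0"
    and m_def: "real m = \<epsilon> powr (-2) * real n powr (1 + \<delta>)"
  defines "A \<equiv> {y \<in> words U m.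
                 \<bar>collstat h n m y * (1 / pnorm2 U q h n) - 1\<bar> \<le> 3 * \<epsilon>}"
  shows "\<forall>x \<in> {x \<in> words U m. talagrand_dist x A < ereal s}.
           \<exists>y \<in> A. \<bar>collstat h n m x - collstat h n m y\<bar>
             \<le> \<epsilon> * pnorm2 U q h n *
                 (6 * s / real n powr (\<delta> / 2) + 5 * s^2 * \<epsilon> / real n powr \<delta>)"
proof
  fix x assume xin: "x \<in> {x \<in> words U m. talagrand_dist x A < ereal s}"
  define P where "P = pnorm2 U q h n"
  have n1: "real n \<ge> 1" using n_gt by simp
  have Pn: "P * real n \<ge> 1" unfolding P_def using pnorm_ge[OF finU q_prob h_range] n_gt by simp
  have P0: "P > 0"
  proof (rule ccontr)
    assume "\<not> P > 0"
    hence "P * real n \<le> 0" using n1 by (simp add: mult_nonpos_nonneg)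
    thus False using Pn by linarith
  qed
  define N where "N = real n powr (\<delta> / 2)"
  have N0: "N > 0" unfolding N_def using n1 by simp
  have nd: "real n powr \<delta> = N * N" unfolding N_def by (simp add: powr_add[symmetric])
  have e2: "\<epsilon> powr (-2) = 1 / (\<epsilon> * \<epsilon>)" using eps_pos
    by (simp add: powr_minus powr_realpow[of \<epsilon> 2, simplified] power2_eq_square divide_inverse)
  have mN: "real m = real n * (N * N) / (\<epsilon> * \<epsilon>)"
    using m_def e2 nd n1 by (simp add: powr_add)
  have m9: "real m \<ge> 9 * real n"
  proof -
    have "\<epsilon> * \<epsilon> \<le> (1/3) * (1/3)" using eps_pos eps_lt by (intro mult_mono) auto
    hence ee: "9 \<le> 1 / (\<epsilon> * \<epsilon>)" using eps_pos by (simp add: field_simps)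
    have NN: "N * N \<ge> 1" using nd n1 delta_pos by (metis ge_one_powr_ge_zero less_imp_le)
    have a: "real n * 1 \<le> real n * (N * N)" using NN by (intro mult_left_mono) auto
    have b: "(real n * (N * N)) * 9 \<le> (real n * (N * N)) * (1 / (\<epsilon> * \<epsilon>))"
      using ee N0 by (intro mult_left_mono) auto
    have "real n * (N * N) / (\<epsilon> * \<epsilon>) = (real n * (N * N)) * (1 / (\<epsilon> * \<epsilon>))" by simp
    thus ?thesis unfolding mN using a b by linarith
  qed
  have mpos: "real m > 0" using m9 n1 by linarith
  have sqm: "sqrt (real m) = sqrt (real n) * N / \<epsilon>"
  proof -
    have "real m = (sqrt (real n) * N / \<epsilon>)^2"
      unfolding mN using n1 by (simp add: power2_eq_square power_divide)
    moreover have "sqrt (real n) * N / \<epsilon> \<ge> 0" using N0 eps_pos by simp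
    ultimately show ?thesis using N0 eps_pos by simp
  qed
  have rhs: "\<epsilon> * P * (6 * s / real n powr (\<delta> / 2) + 5 * s^2 * \<epsilon> / real n powr \<delta>)
      = 6 * s * P * sqrt (real n) / sqrt (real m) + 5 * s^2 * P * real n / real m"
  proof -
    have sn: "sqrt (real n) > 0" using n1 by simp
    have t1: "\<epsilon> * P * (6 * s / N) = 6 * s * P * sqrt (real n) / (sqrt (real n) * N / \<epsilon>)"
      using sn N0 eps_pos by (simp add: field_simps)
    have t2: "\<epsilon> * P * (5 * s^2 * \<epsilon> / (N * N)) = 5 * s^2 * P * real n / (real n * (N * N) / (\<epsilon> * \<epsilon>))"
      using n1 N0 eps_pos by (simp add: field_simps)
    show ?thesis unfolding sqm unfolding mN nd N_def[symmetric] distrib_left t1 t2 ..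
  qed
  from xin have xw: "x \<in> words U m" and td: "talagrand_dist x A < ereal s" by auto
  have lx: "length x = m" and sx: "set x \<subseteq> U" using xw by (auto simp: words_def)
  define \<alpha> where "\<alpha> = (\<lambda>j::nat. 1 / sqrt (real m))"
  have \<alpha>in: "\<alpha> \<in> {\<alpha>::nat \<Rightarrow> real. (\<Sum>j<length x. (\<alpha> j)^2) \<le> 1}"
    using mpos lx by (simp add: \<alpha>_def power_divide)
  have "(INF y \<in> A. ereal (\<Sum>j<length x. \<alpha> j * (if x ! j \<noteq> y ! j then 1 else 0)))
        \<le> talagrand_dist x A"
    unfolding talagrand_dist_def by (rule SUP_upper[OF \<alpha>in])
  with td have "(INF y \<in> A. ereal (\<Sum>j<length x. \<alpha> j * (if x ! j \<noteq> y ! j then 1 else 0))) < ereal s"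
    by simp
  then obtain y where yA: "y \<in> A"
    and ys: "ereal (\<Sum>j<length x. \<alpha> j * (if x ! j \<noteq> y ! j then 1 else 0)) < ereal s"
    by (auto simp: INF_less_iff)
  define D where "D = {j. j < m \<and> x ! j \<noteq> y ! j}"
  have "(\<Sum>j<length x. \<alpha> j * (if x ! j \<noteq> y ! j then 1 else 0)) = real (card D) / sqrt (real m)"
  proof -
    have "(\<Sum>j<length x. \<alpha> j * (if x ! j \<noteq> y ! j then 1 else 0))
        = (\<Sum>j<m. if x ! j \<noteq> y ! j then 1 / sqrt (real m) else 0)"
      using lx by (intro sum.cong) (auto simp: \<alpha>_def)
    also have "\<dots> = (\<Sum>j\<in>{j\<in>{..<m}. x ! j \<noteq> y ! j}. 1 / sqrt (real m))"
      by (rule sum.inter_filter[symmetric]) simp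
    also have "{j\<in>{..<m}. x ! j \<noteq> y ! j} = D" unfolding D_def by auto
    finally show ?thesis by simp
  qed
  with ys have tD: "real (card D) < s * sqrt (real m)"
    using mpos by (simp add: divide_less_eq)
  have yw: "y \<in> words U m" and yc: "\<bar>collstat h n m y * (1 / P) - 1\<bar> \<le> 3 * \<epsilon>"
    using yA unfolding A_def P_def by auto
  have ly: "length y = m" and sy: "set y \<subseteq> U" using yw by (auto simp: words_def)
  define f where "f j = h (x ! j)" for j
  define g where "g j = h (y ! j)" for j
  have fI: "\<forall>j<m. f j \<in> {1..n}" using sx lx h_range unfolding f_def
    by (metis nth_mem subsetD)
  have gI: "\<forall>j<m. g j \<in> {1..n}" using sy ly h_range unfolding g_def
    by (metis nth_mem subsetD)
  have kx: "real (kcount h i x) = real (card {j. j < m \<and> f j = i})" for i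
    unfolding kcount_def f_def lx by simp
  have ky: "real (kcount h i y) = real (card {j. j < m \<and> g j = i})" for i
    unfolding kcount_def g_def ly by simp
  have Dsub: "D \<subseteq> {..<m}" unfolding D_def by auto
  have agree: "\<forall>j<m. j \<notin> D \<longrightarrow> f j = g j" unfolding D_def f_def g_def by auto
  note C = comb[OF _ fI gI Dsub agree]
  define K where "K = (\<Sum>i=1..n. (real (kcount h i x))^2)"
  define K' where "K' = (\<Sum>i=1..n. (real (kcount h i y))^2)"
  have Sx: "(\<Sum>i=1..n. real (kcount h i x)) = real m" unfolding kx using fiber_sum fI by blast
  have Sy: "(\<Sum>i=1..n. real (kcount h i y)) = real m" unfolding ky using fiber_sum gI by blast
  have KK: "\<bar>K - K'\<bar> \<le> 2 * real (card D) * sqrt K' + (real (card D))^2"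
    using C(2) unfolding K_def K'_def kx ky by simp
  have mm: "real m * (real m - 1) > 0" using m9 n1 by simp
  have cy: "collstat h n m y = (K' - real m) / (real m * (real m - 1))"
    unfolding collstat_eq K'_def Sy ..
  have cx: "collstat h n m x = (K - real m) / (real m * (real m - 1))"
    unfolding collstat_eq K_def Sx ..
  have "collstat h n m y \<le> 2 * P"
  proof -
    have "collstat h n m y * (1 / P) \<le> 2" using yc eps_lt by linarith
    thus ?thesis using P0 by (simp add: field_simps)
  qed
  hence K'le: "K' \<le> 2 * P * real m * (real m - 1) + real m"
    unfolding cy using mm by (simp add: field_simps)
  have K'0: "K' \<ge> 0" unfolding K'_def by (simp add: sum_nonneg)
  have main: "\<bar>K - K'\<bar> / (real m * (real m - 1))
      \<le> 6 * s * P * sqrt (real n) / sqrt (real m) + 5 * s^2 * P * real n / real m"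
    by (rule arith_core[OF KK _ tD K'0 K'le Pn n1 m9 s_pos]) simp
  have "\<bar>collstat h n m x - collstat h n m y\<bar> = \<bar>K - K'\<bar> / (real m * (real m - 1))"
    unfolding cx cy using mm by (simp add: diff_divide_distrib[symmetric])
  hence fin: "\<bar>collstat h n m x - collstat h n m y\<bar> \<le> \<epsilon> * P *
                 (6 * s / real n powr (\<delta> / 2) + 5 * s^2 * \<epsilon> / real n powr \<delta>)"
    using main rhs by linarith
  show "\<exists>y \<in> A. \<bar>collstat h n m x - collstat h n m y\<bar>
             \<le> \<epsilon> * pnorm2 U q h n *
                 (6 * s / real n powr (\<delta> / 2) + 5 * s^2 * \<epsilon> / real n powr \<delta>)"
    using fin yA unfolding P_def by blast
qed

end
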